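(* Consider the following downlink scheduling model. There are $K$ users and discrete time slots $t=1,2,\dots$ of duration $\Delta_0>0$ on a channel of bandwidth $B>0$. In slot $t$ user $k$ has SNR $\phi_k(t)\ge 0$; for each $k$, $(\phi_k(t))_{t\ge1}$ is an i.i.d. sequence of continuous random variables, and the SNRs of different users are independent. Write $\mathbf{s}(t)=[\phi_1(t),\dots,\phi_K(t)]^{\rm T}$. A scheduling action in slot $t$ is $\mathbf{x}(t)=[x_1(t),\dots,x_K(t)]^{\rm T}$ with $x_k(t)\in\{0,1\}$ for all $k$ and $\sum_{k=1}^K x_k(t)\le 1$. For weights $\mathbf{w}\in\mathbb{R}^K$ with $\mathbf{w}>0$ (componentwise) and $\|\mathbf{w}\|_2=1$, the max-weight scheduler $\mu(\cdot|\mathbf{w})$ chooses in every slot $$\mathbf{x}(t)=\mu(\mathbf{s}(t)|\mathbf{w})\in\arg\max_{\mathbf{x}'}\sum_{k=1}^K x'_k\, w_k\,\Delta_0 B\log_2(1+\phi_k(t))$$ over all admissible actions $\mathbf{x}'$, and its average rates are $r_k^{\sim\mu(\cdot|\mathbf{w})}=\lim_{T\to\infty}\frac1T\sum_{t=1}^T x_k(t)\Delta_0B\log_2(1+\phi_k(t))$, $k=1,\dots,K$. Let the feasible rate region be $$\mathcal{F}=\Big\{\mathbf{r}\in\mathbb{R}^K:\ r_k=\lim_{T\to\infty}\frac1T\sum_{t=1}^T x_k(t)\Delta_0B\log_2(1+\phi_k(t))\ \forall k,\ \text{for some sequence of admissible actions }\mathbf{x}(t)\Big\}.$$ Then for every such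 $\mathbf{w}$, $$\mathbf{r}^{\sim\mu(\cdot|\mathbf{w})}=\arg\max_{\mathbf{r}\in\mathcal{F}}\langle \mathbf{w},\mathbf{r}\rangle .$$
   Context: $\langle\cdot,\cdot\rangle$ is the Euclidean inner product. $\mathbf{w}>0$ means every component is strictly positive. The limits defining average rates are assumed to exist, as in the model. *)

theory Defs
  imports "HOL-Probability.Probability"
begin

definition slot_rate :: "real \<Rightarrow> real \<Rightarrow> real \<Rightarrow> real" where
  "slot_rate \<Delta>0 B phi = \<Delta>0 * B * log 2 (1 + phi)"

definition admissible :: "('k::finite \<Rightarrow> real) \<Rightarrow> bool" where
  "admissible x \<longleftrightarrow> (\<forall>k. x k \<in> {0, 1}) \<and> (\<Sum>k\<in>UNIV. x k) \<le> 1"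

definition sched_obj :: "real \<Rightarrow> real \<Rightarrow> ('k::finite \<Rightarrow> real) \<Rightarrow> ('k \<Rightarrow> real) \<Rightarrow> ('k \<Rightarrow> real) \<Rightarrow> real" where
  "sched_obj \<Delta>0 B w s x = (\<Sum>k\<in>UNIV. x k * w k * slot_rate \<Delta>0 B (s k))"

definition max_weight_scheduler ::
  "real \<Rightarrow> real \<Rightarrow> ('k::finite \<Rightarrow> real) \<Rightarrow> (('k \<Rightarrow> real) \<Rightarrow> ('k \<Rightarrow> real)) \<Rightarrow> bool" where
  "max_weight_scheduler \<Delta>0 B w mu \<longleftrightarrow>
     (\<forall>s. admissible (mu s) \<and>
          (\<forall>x'. admissible x' \<longrightarrow> sched_obj \<Delta>0 B w s x' \<le> sched_obj \<Delta>0 B w s (mu s)))"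

definition avg_rate :: "real \<Rightarrow> real \<Rightarrow> (nat \<Rightarrow> 'k \<Rightarrow> real) \<Rightarrow> ('k \<Rightarrow> nat \<Rightarrow> real) \<Rightarrow> 'k \<Rightarrow> nat \<Rightarrow> real" where
  "avg_rate \<Delta>0 B x phi k T = (\<Sum>t=1..T. x t k * slot_rate \<Delta>0 B (phi k t)) / real T"

text \<open>Feasible rate region along the sample path phi.\<close>
definition feasible_region :: "real \<Rightarrow> real \<Rightarrow> ('k::finite \<Rightarrow> nat \<Rightarrow> real) \<Rightarrow> ('k \<Rightarrow> real) set" where
  "feasible_region \<Delta>0 B phi =
     {r. \<exists>x. (\<forall>t. admissible (x t)) \<and> (\<forall>k. avg_rate \<Delta>0 B x phi k \<longlonglongrightarrow> r k)}"

definition argmax_inner :: "('k::finite \<Rightarrow> real) \<Rightarrow> ('k \<Rightarrow> real) set \<Rightarrow> ('k \<Rightarrow> real) set" where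
  "argmax_inner w F = {r \<in> F. \<forall>r'\<in>F. (\<Sum>k\<in>UNIV. w k * r' k) \<le> (\<Sum>k\<in>UNIV. w k * r k)}"

end

theory Submission
  imports Defs
begin

lemma adm_cases:
  fixes x :: "'k::finite \<Rightarrow> real"
  assumes "admissible x"
  obtains "x = (\<lambda>_. 0)" | j where "x = (\<lambda>k. if k = j then 1 else 0)"
proof (cases "\<exists>j. x j = 1")
  case False
  then have "x = (\<lambda>_. 0)" using assms by (auto simp: admissible_def fun_eq_iff)
  then show ?thesis using that by blast
next
  case True
  then obtain j where j: "x j = 1" by blast
  have "x k = 0" if "k \<noteq> j" for k
  proof (rule ccontr)
    assume "x k \<noteq> 0"
    then have xk: "x k = 1" using assms by (auto simp: admissible_def)
    have nn: "\<forall>i. 0 \<le> x i"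
    proof
      fix i have "x i \<in> {0,1}" using assms by (auto simp: admissible_def)
      then show "0 \<le> x i" by auto
    qed
    have "(\<Sum>i\<in>{j,k}. x i) \<le> (\<Sum>i\<in>UNIV. x i)"
      by (rule sum_mono2) (use nn in auto)
    then show False using j xk that assms by (auto simp: admissible_def)
  qed
  then have "x = (\<lambda>k. if k = j then 1 else 0)" using j by (auto simp: fun_eq_iff)
  then show ?thesis using that by blast
qed

lemma adm_zero: "admissible (\<lambda>_::'k::finite. 0::real)"
  by (simp add: admissible_def)

lemma adm_e: "admissible (\<lambda>k::'k::finite. if k = j then 1 else (0::real))"
  by (simp add: admissible_def)

lemma obj_zero: "sched_obj D B w s (\<lambda>_. 0) = 0"
  by (simp add: sched_obj_def)

lemma obj_e: "sched_obj D B w s (\<lambda>k. if k = j then 1 else 0) = w j * slot_rate D B (s j)"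
proof -
  have "\<And>k. (if k = j then 1 else 0) * w k * slot_rate D B (s k) = (if k = j then w j * slot_rate D B (s j) else 0)"
    by auto
  then show ?thesis by (simp add: sched_obj_def)
qed

definition Mx :: "real \<Rightarrow> real \<Rightarrow> ('k::finite \<Rightarrow> real) \<Rightarrow> ('k \<Rightarrow> real) \<Rightarrow> real" where
  "Mx D B w s = Max (insert 0 (range (\<lambda>k. w k * slot_rate D B (s k))))"

lemma obj_in: assumes "admissible x" shows "sched_obj D B w s x \<in> insert 0 (range (\<lambda>k. w k * slot_rate D B (s k)))"
  using assms proof (cases rule: adm_cases)
  case 1 then show ?thesis by (simp add: obj_zero)
next
  case (2 j) then show ?thesis by (simp add: obj_e)
qed

lemma obj_le_Mx: "admissible x \<Longrightarrow> sched_obj D B w s x \<le> Mx D B w s"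
  unfolding Mx_def by (rule Max_ge) (auto dest: obj_in[of _ D B w s])

lemma Mx_ge0: "0 \<le> Mx D B w s"
  unfolding Mx_def by (rule Max_ge) auto

lemma Mx_ge_v: "w k * slot_rate D B (s k) \<le> Mx D B w s"
  unfolding Mx_def by (rule Max_ge) auto

lemma mw_obj:
  assumes "max_weight_scheduler D B w mu"
  shows "sched_obj D B w s (mu s) = Mx D B w s"
proof -
  have adm: "admissible (mu s)" and mx: "\<And>x'. admissible x' \<Longrightarrow> sched_obj D B w s x' \<le> sched_obj D B w s (mu s)"
    using assms by (auto simp: max_weight_scheduler_def)
  show ?thesis unfolding Mx_def
  proof (rule Max_eqI[symmetric])
    show "sched_obj D B w s (mu s) \<in> insert 0 (range (\<lambda>k. w k * slot_rate D B (s k)))"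
      by (rule obj_in[OF adm])
    fix y assume "y \<in> insert 0 (range (\<lambda>k. w k * slot_rate D B (s k)))"
    then show "y \<le> sched_obj D B w s (mu s)"
      using mx[OF adm_zero] mx[OF adm_e] by (auto simp: obj_zero obj_e)
  qed auto
qed

definition near :: "real \<Rightarrow> real \<Rightarrow> ('k::finite \<Rightarrow> real) \<Rightarrow> real \<Rightarrow> ('k \<Rightarrow> real) \<Rightarrow> bool" where
  "near D B w \<eta> s = (\<exists>i j. i \<noteq> j \<and> \<bar>w i * slot_rate D B (s i) - w j * slot_rate D B (s j)\<bar> < \<eta>)"

lemma slot_rate_nonneg: "D > 0 \<Longrightarrow> B > 0 \<Longrightarrow> y \<ge> 0 \<Longrightarrow> slot_rate D B y \<ge> 0"
  by (simp add: slot_rate_def)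

lemma slot_bound:
  fixes x y s :: "'k::finite \<Rightarrow> real"
  assumes D: "D > 0" and B: "B > 0" and w: "\<And>i. w i > 0" and s: "\<And>i. s i \<ge> 0"
    and ax: "admissible x" and ay: "admissible y" and oy: "sched_obj D B w s y = Mx D B w s"
    and L: "L \<ge> 0" and eta: "\<eta> > 0"
  shows "\<bar>x k * slot_rate D B (s k) - y k * slot_rate D B (s k)\<bar> \<le>
    (2 * (Mx D B w s - min (Mx D B w s) L) + 2 * L * (Mx D B w s - sched_obj D B w s x) / \<eta> + \<eta>
      + 2 * L * (if near D B w \<eta> s then 1 else 0)) / w k"
proof -
  define Mv where "Mv = Mx D B w s"
  define d where "d = Mv - sched_obj D B w s x"
  have R: "\<And>i. slot_rate D B (s i) \<ge> 0" using slot_rate_nonneg[OF D B s] .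
  have vle: "\<And>i. w i * slot_rate D B (s i) \<le> Mv" unfolding Mv_def by (rule Mx_ge_v)
  have M0: "Mv \<ge> 0" unfolding Mv_def by (rule Mx_ge0)
  have d0: "d \<ge> 0" unfolding d_def Mv_def using obj_le_Mx[OF ax] by simp
  have wk: "w k > 0" by (rule w)
  have Rk: "slot_rate D B (s k) \<le> Mv / w k"
    using vle[of k] wk by (simp add: field_simps mult.commute)
  have one: "\<bar>x k * slot_rate D B (s k) - y k * slot_rate D B (s k)\<bar> \<le> (if x = y then 0 else Mv / w k)"
  proof -
    have xk: "x k \<in> {0,1}" "y k \<in> {0,1}" using ax ay by (auto simp: admissible_def)
    show ?thesis using xk R[of k] Rk by auto
  qed
  have two: "Mv \<le> 2 * (Mv - min Mv L) + 2 * L * d / \<eta> + \<eta> + 2 * L * (if near D B w \<eta> s then 1 else 0)"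
    if "x \<noteq> y"
  proof -
    have t1: "0 \<le> 2 * (Mv - min Mv L)" by simp
    have t2: "0 \<le> 2 * L * d / \<eta>" using L d0 eta by simp
    have t4: "0 \<le> 2 * L * (if near D B w \<eta> s then 1 else 0)" using L by simp
    consider "Mv > 2 * L" | "Mv \<le> 2 * L" "d \<ge> \<eta>" | "Mv < \<eta>" | "Mv \<le> 2 * L" "d < \<eta>" "Mv \<ge> \<eta>" by linarith
    then show ?thesis
    proof cases
      case 1 then show ?thesis using t2 t4 eta L by (simp add: min_def)
    next
      case 2
      have "2 * L \<le> 2 * L * d / \<eta>" using 2 L eta by (simp add: field_simps mult_left_mono)
      then show ?thesis using 2 t1 t4 eta by linarith
    next
      case 3 then show ?thesis using t1 t2 t4 by linarith
    next
      case 4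
      have "near D B w \<eta> s"
      proof -
        from ax obtain j where xj: "x = (\<lambda>k. if k = j then 1 else 0)"
        proof (cases rule: adm_cases)
          case 1 then have "d = Mv" by (simp add: d_def obj_zero)
          then show ?thesis using 4 by simp
        qed
        from ay obtain i where yi: "y = (\<lambda>k. if k = i then 1 else 0)"
        proof (cases rule: adm_cases)
          case 1 then have "Mv = 0" using oy by (simp add: Mv_def obj_zero)
          then show ?thesis using 4 eta by simp
        qed
        have "i \<noteq> j" using that xj yi by auto
        moreover have "Mv = w i * slot_rate D B (s i)" using oy yi by (simp add: Mv_def obj_e)
        moreover have "d = Mv - w j * slot_rate D B (s j)" using xj by (simp add: d_def obj_e)
        ultimately show ?thesis unfolding near_def using 4 vle[of j] by (intro exI[of _ i] exI[of _ j]) auto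
      qed
      then show ?thesis using 4 t1 t2 L eta M0 by (simp add: min_def)
    qed
  qed
  show ?thesis
  proof (cases "x = y")
    case True then show ?thesis using one
      by (smt (verit, best) L d0 d_def divide_nonneg_pos eta Mv_def min.cobounded1 mult_nonneg_nonneg wk)
  next
    case False
    have "Mv / w k \<le> (2 * (Mv - min Mv L) + 2 * L * d / \<eta> + \<eta> + 2 * L * (if near D B w \<eta> s then 1 else 0)) / w k"
      using two[OF False] wk by (simp add: divide_right_mono)
    then show ?thesis using one False by (simp add: Mv_def d_def)
  qed
qed


definition avg :: "(nat \<Rightarrow> real) \<Rightarrow> nat \<Rightarrow> real" where
  "avg f T = (\<Sum>t=1..T. f t) / real T"

lemma avg_rate_avg: "avg_rate D B x phi k = avg (\<lambda>t. x t k * slot_rate D B (phi k t))"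
  by (simp add: fun_eq_iff avg_rate_def avg_def)

lemma avg_mono: "(\<And>t. 1 \<le> t \<Longrightarrow> f t \<le> g t) \<Longrightarrow> avg f T \<le> avg g T"
  unfolding avg_def by (intro divide_right_mono sum_mono) auto

lemma avg_abs: "\<bar>avg f T - avg g T\<bar> \<le> avg (\<lambda>t. \<bar>f t - g t\<bar>) T"
proof -
  have "\<bar>avg f T - avg g T\<bar> = \<bar>\<Sum>t=1..T. f t - g t\<bar> / real T"
    by (simp add: avg_def diff_divide_distrib[symmetric] sum_subtractf)
  also have "\<dots> \<le> (\<Sum>t=1..T. \<bar>f t - g t\<bar>) / real T"
    by (intro divide_right_mono sum_abs) auto
  finally show ?thesis by (simp add: avg_def)
qed

lemma avg_sum: "avg (\<lambda>t. \<Sum>k\<in>UNIV. c k * f k t) T = (\<Sum>k\<in>UNIV. c k * avg (f k) T)"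
  unfolding avg_def by (simp add: sum_divide_distrib sum_distrib_left mult.assoc) (rule sum.swap)

lemma avg_lin:
  assumes "T \<ge> 1"
  shows "avg (\<lambda>t. (a * (f1 t - f2 t) + b * (f1 t - f3 t) + c + e * f4 t) / q) T
       = (a * (avg f1 T - avg f2 T) + b * (avg f1 T - avg f3 T) + c + e * avg f4 T) / q"
proof -
  have T: "real T > 0" using assms by simp
  have d: "avg (\<lambda>t. h t / q) T = avg h T / q" for h
    by (simp add: avg_def sum_divide_distrib[symmetric])
  have "avg (\<lambda>t. a * (f1 t - f2 t) + b * (f1 t - f3 t) + c + e * f4 t) T
       = a * (avg f1 T - avg f2 T) + b * (avg f1 T - avg f3 T) + c + e * avg f4 T"
    using T unfolding avg_def
    by (simp add: sum.distrib sum_subtractf sum_distrib_left[symmetric] field_simps)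
  then show ?thesis by (simp add: d)
qed

lemma obj_avg:
  "avg (\<lambda>t. sched_obj D B w (\<lambda>j. phi j t) (x t)) T = (\<Sum>k\<in>UNIV. w k * avg_rate D B x phi k T)"
proof -
  have "avg (\<lambda>t. sched_obj D B w (\<lambda>j. phi j t) (x t)) T = avg (\<lambda>t. \<Sum>k\<in>UNIV. w k * (x t k * slot_rate D B (phi k t))) T"
    unfolding sched_obj_def by (simp add: mult_ac)
  also have "\<dots> = (\<Sum>k\<in>UNIV. w k * avg_rate D B x phi k T)"
    by (subst avg_sum) (simp add: avg_rate_avg)
  finally show ?thesis .
qed

lemma pathwise:
  fixes phi :: "'k::finite \<Rightarrow> nat \<Rightarrow> real" and mu :: "('k \<Rightarrow> real) \<Rightarrow> ('k \<Rightarrow> real)"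
  assumes D: "D > 0" and B: "B > 0" and w: "\<And>k. w k > 0" and mw: "max_weight_scheduler D B w mu"
    and nonneg: "\<And>k t. t \<ge> 1 \<Longrightarrow> phi k t \<ge> 0"
    and conv: "\<forall>k. convergent (avg_rate D B (\<lambda>t. mu (\<lambda>j. phi j t)) phi k)"
    and H3: "\<And>L::nat. avg (\<lambda>t. min (Mx D B w (\<lambda>j. phi j t)) (real L)) \<longlonglongrightarrow> m L"
    and H4: "\<And>n::nat. avg (\<lambda>t. if near D B w (inverse (real (Suc n))) (\<lambda>j. phi j t) then 1 else 0) \<longlonglongrightarrow> p n"
    and H5: "avg (\<lambda>t. Mx D B w (\<lambda>j. phi j t)) \<longlonglongrightarrow> EM"
    and mlim: "m \<longlonglongrightarrow> EM" and plim: "p \<longlonglongrightarrow> 0"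
  shows "argmax_inner w (feasible_region D B phi) = {\<lambda>k. lim (avg_rate D B (\<lambda>t. mu (\<lambda>j. phi j t)) phi k)}"
proof -
  define xs where "xs = (\<lambda>t. mu (\<lambda>j. phi j t))"
  define rs where "rs = (\<lambda>k. lim (avg_rate D B xs phi k))"
  have tr: "\<And>k. avg_rate D B xs phi k \<longlonglongrightarrow> rs k"
    using conv unfolding rs_def xs_def by (simp add: convergent_LIMSEQ_iff)
  have adm_xs: "\<And>t. admissible (xs t)" using mw by (simp add: xs_def max_weight_scheduler_def)
  have Mx_eq: "\<And>t. Mx D B w (\<lambda>j. phi j t) = sched_obj D B w (\<lambda>j. phi j t) (xs t)"
    unfolding xs_def using mw_obj[OF mw] by simp
  have objlim: "avg (\<lambda>t. sched_obj D B w (\<lambda>j. phi j t) (x t)) \<longlonglongrightarrow> (\<Sum>k\<in>UNIV. w k * r k)"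
    if "\<forall>k. avg_rate D B x phi k \<longlonglongrightarrow> r k" for x r
    unfolding obj_avg using that by (intro tendsto_sum tendsto_mult tendsto_const) auto
  have rs_EM: "(\<Sum>k\<in>UNIV. w k * rs k) = EM"
  proof (rule LIMSEQ_unique)
    show "avg (\<lambda>t. sched_obj D B w (\<lambda>j. phi j t) (xs t)) \<longlonglongrightarrow> (\<Sum>k\<in>UNIV. w k * rs k)"
      using objlim tr by blast
    show "avg (\<lambda>t. sched_obj D B w (\<lambda>j. phi j t) (xs t)) \<longlonglongrightarrow> EM"
      using H5 by (simp add: Mx_eq)
  qed
  have rs_F: "rs \<in> feasible_region D B phi"
    unfolding feasible_region_def using adm_xs tr by blast
  have le_EM: "(\<Sum>k\<in>UNIV. w k * r k) \<le> EM" if "r \<in> feasible_region D B phi" for r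
  proof -
    from that obtain x where ax: "\<forall>t. admissible (x t)" and rx: "\<forall>k. avg_rate D B x phi k \<longlonglongrightarrow> r k"
      unfolding feasible_region_def by blast
    have "\<forall>T. avg (\<lambda>t. sched_obj D B w (\<lambda>j. phi j t) (x t)) T \<le> avg (\<lambda>t. Mx D B w (\<lambda>j. phi j t)) T"
      using ax by (auto intro!: avg_mono obj_le_Mx)
    then show ?thesis
      by (intro LIMSEQ_le[OF objlim[OF rx] H5]) auto
  qed
  have uniq: "r = rs" if rF: "r \<in> feasible_region D B phi" and rge: "EM \<le> (\<Sum>k\<in>UNIV. w k * r k)" for r
  proof
    fix k
    from rF obtain x where ax: "\<forall>t. admissible (x t)" and rx: "\<forall>k. avg_rate D B x phi k \<longlonglongrightarrow> r k"
      unfolding feasible_region_def by blast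
    have rEM: "(\<Sum>k\<in>UNIV. w k * r k) = EM" using le_EM[OF rF] rge by simp
    define \<eta> where "\<eta> = (\<lambda>n::nat. inverse (real (Suc n)))"
    have eta_pos: "\<And>n. \<eta> n > 0" by (simp add: \<eta>_def)
    define G where "G = (\<lambda>(L::nat) n. (2 * (EM - m L) + 2 * real L * (EM - EM) / \<eta> n + \<eta> n + 2 * real L * p n) / w k)"
    have bound: "\<bar>r k - rs k\<bar> \<le> G L n" for L n
    proof (rule LIMSEQ_le)
      show "(\<lambda>T. \<bar>avg_rate D B x phi k T - avg_rate D B xs phi k T\<bar>) \<longlonglongrightarrow> \<bar>r k - rs k\<bar>"
        using rx tr by (intro tendsto_rabs tendsto_diff) auto
      define g where "g = (\<lambda>t. (2 * (Mx D B w (\<lambda>j. phi j t) - min (Mx D B w (\<lambda>j. phi j t)) (real L))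
          + (2 * real L / \<eta> n) * (Mx D B w (\<lambda>j. phi j t) - sched_obj D B w (\<lambda>j. phi j t) (x t)) + \<eta> n
          + 2 * real L * (if near D B w (\<eta> n) (\<lambda>j. phi j t) then 1 else 0)) / w k)"
      have gt: "g t = (2 * (Mx D B w (\<lambda>j. phi j t) - min (Mx D B w (\<lambda>j. phi j t)) (real L))
          + 2 * real L * (Mx D B w (\<lambda>j. phi j t) - sched_obj D B w (\<lambda>j. phi j t) (x t)) / \<eta> n + \<eta> n
          + 2 * real L * (if near D B w (\<eta> n) (\<lambda>j. phi j t) then 1 else 0)) / w k" for t
        unfolding g_def by simp
      have geq: "avg g T = (2 * (avg (\<lambda>t. Mx D B w (\<lambda>j. phi j t)) T - avg (\<lambda>t. min (Mx D B w (\<lambda>j. phi j t)) (real L)) T)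
          + (2 * real L / \<eta> n) * (avg (\<lambda>t. Mx D B w (\<lambda>j. phi j t)) T - avg (\<lambda>t. sched_obj D B w (\<lambda>j. phi j t) (x t)) T) + \<eta> n
          + 2 * real L * avg (\<lambda>t. if near D B w (\<eta> n) (\<lambda>j. phi j t) then 1 else 0) T) / w k" if "T \<ge> 1" for T
        unfolding g_def by (rule avg_lin[OF that])
      have "(\<lambda>T. (2 * (avg (\<lambda>t. Mx D B w (\<lambda>j. phi j t)) T - avg (\<lambda>t. min (Mx D B w (\<lambda>j. phi j t)) (real L)) T)
          + (2 * real L / \<eta> n) * (avg (\<lambda>t. Mx D B w (\<lambda>j. phi j t)) T - avg (\<lambda>t. sched_obj D B w (\<lambda>j. phi j t) (x t)) T) + \<eta> n
          + 2 * real L * avg (\<lambda>t. if near D B w (\<eta> n) (\<lambda>j. phi j t) then 1 else 0) T) / w k)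
          \<longlonglongrightarrow> (2 * (EM - m L) + (2 * real L / \<eta> n) * (EM - (\<Sum>k\<in>UNIV. w k * r k)) + \<eta> n + 2 * real L * p n) / w k"
        using H3[of L] H4[of n] H5 objlim[OF rx] w[of k] unfolding \<eta>_def
        by (intro tendsto_intros) auto
      then have "(\<lambda>T. (2 * (avg (\<lambda>t. Mx D B w (\<lambda>j. phi j t)) T - avg (\<lambda>t. min (Mx D B w (\<lambda>j. phi j t)) (real L)) T)
          + (2 * real L / \<eta> n) * (avg (\<lambda>t. Mx D B w (\<lambda>j. phi j t)) T - avg (\<lambda>t. sched_obj D B w (\<lambda>j. phi j t) (x t)) T) + \<eta> n
          + 2 * real L * avg (\<lambda>t. if near D B w (\<eta> n) (\<lambda>j. phi j t) then 1 else 0) T) / w k)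
          \<longlonglongrightarrow> G L n"
        unfolding G_def rEM by simp
      then show "avg g \<longlonglongrightarrow> G L n"
        by (rule Lim_transform_eventually) (auto simp: eventually_sequentially geq intro!: exI[of _ 1])
      show "\<exists>N. \<forall>T\<ge>N. \<bar>avg_rate D B x phi k T - avg_rate D B xs phi k T\<bar> \<le> avg g T"
      proof (intro exI allI impI)
        fix T :: nat
        have "\<bar>avg_rate D B x phi k T - avg_rate D B xs phi k T\<bar>
            \<le> avg (\<lambda>t. \<bar>x t k * slot_rate D B (phi k t) - xs t k * slot_rate D B (phi k t)\<bar>) T"
          unfolding avg_rate_avg by (rule avg_abs)
        also have "\<dots> \<le> avg g T"
          unfolding gt
          by (rule avg_mono, rule slot_bound[OF D B w])
             (use nonneg ax adm_xs Mx_eq eta_pos in auto)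
        finally show "\<bar>avg_rate D B x phi k T - avg_rate D B xs phi k T\<bar> \<le> avg g T" .
      qed
    qed
    have lim1: "(\<lambda>n. G L n) \<longlonglongrightarrow> (2 * (EM - m L)) / w k" for L
    proof -
      have "\<eta> \<longlonglongrightarrow> 0" unfolding \<eta>_def by (rule LIMSEQ_inverse_real_of_nat)
      then have "(\<lambda>n. (2 * (EM - m L) + 0 + \<eta> n + 2 * real L * p n) / w k) \<longlonglongrightarrow> (2 * (EM - m L) + 0 + 0 + 2 * real L * 0) / w k"
        using plim w[of k] by (intro tendsto_intros) auto
      then show ?thesis unfolding G_def by simp
    qed
    have bound2: "\<bar>r k - rs k\<bar> \<le> (2 * (EM - m L)) / w k" for L
      by (rule LIMSEQ_le_const[OF lim1]) (use bound in auto)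
    have "(\<lambda>L. (2 * (EM - m L)) / w k) \<longlonglongrightarrow> (2 * (EM - EM)) / w k"
      using mlim w[of k] by (intro tendsto_intros) auto
    then have "\<bar>r k - rs k\<bar> \<le> 0"
      by (intro LIMSEQ_le_const[of _ _ "\<bar>r k - rs k\<bar>"]) (use bound2 in auto)
    then show "r k = rs k" by simp
  qed
  show ?thesis
  proof (intro equalityI subsetI)
    fix r assume "r \<in> argmax_inner w (feasible_region D B phi)"
    then have "r \<in> feasible_region D B phi" "(\<Sum>k\<in>UNIV. w k * rs k) \<le> (\<Sum>k\<in>UNIV. w k * r k)"
      using rs_F unfolding argmax_inner_def by auto
    then have "r = rs" using uniq rs_EM by simp
    then show "r \<in> {\<lambda>k. lim (avg_rate D B (\<lambda>t. mu (\<lambda>j. phi j t)) phi k)}"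
      by (simp add: rs_def xs_def)
  next
    fix r assume "r \<in> {\<lambda>k. lim (avg_rate D B (\<lambda>t. mu (\<lambda>j. phi j t)) phi k)}"
    then have "r = rs" by (simp add: rs_def xs_def)
    then show "r \<in> argmax_inner w (feasible_region D B phi)"
      unfolding argmax_inner_def using rs_F le_EM rs_EM by auto
  qed
qed


lemma meas_vec:
  fixes \<phi> :: "'k::finite \<Rightarrow> nat \<Rightarrow> 'a \<Rightarrow> real"
  assumes meas: "\<And>k t. \<phi> k t \<in> borel_measurable M"
  shows "(\<lambda>\<omega>. \<lambda>j. \<phi> j t \<omega>) \<in> measurable M (PiM UNIV (\<lambda>_. borel))"
  by (rule measurable_PiM_single') (use meas in auto)

context prob_space
begin

lemma iid_G:
  fixes \<phi> :: "'k::finite \<Rightarrow> nat \<Rightarrow> 'a \<Rightarrow> real"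
  assumes meas: "\<And>k t. \<phi> k t \<in> borel_measurable M"
    and indep: "indep_vars (\<lambda>_. borel) (\<lambda>(k, t). \<phi> k t) (UNIV \<times> {1..})"
    and ident: "\<And>k t. t \<ge> 1 \<Longrightarrow> distr M borel (\<phi> k t) = distr M borel (\<phi> k 1)"
    and G: "G \<in> borel_measurable (PiM UNIV (\<lambda>_. borel))"
  shows "indep_vars (\<lambda>_. borel) (\<lambda>t \<omega>. G (\<lambda>j. \<phi> j t \<omega>)) {1..}"
    and "\<And>t. t \<ge> 1 \<Longrightarrow> distr M borel (\<lambda>\<omega>. G (\<lambda>j. \<phi> j t \<omega>)) = distr M borel (\<lambda>\<omega>. G (\<lambda>j. \<phi> j 1 \<omega>))"
proof -
  have R: "indep_vars (\<lambda>t. PiM (UNIV \<times> {t}) (\<lambda>_. borel))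
      (\<lambda>t \<omega>. restrict (\<lambda>i. (\<lambda>(k, t). \<phi> k t) i \<omega>) (UNIV \<times> {t})) {1..}"
    by (rule indep_vars_restrict[OF indep]) (auto simp: disjoint_family_on_def)
  have Ym: "(\<lambda>f. G (\<lambda>j. f (j, t))) \<in> borel_measurable (PiM (UNIV \<times> {t}) (\<lambda>_. borel))" for t :: nat
  proof (rule measurable_compose[OF _ G])
    show "(\<lambda>f j. f (j, t)) \<in> measurable (PiM (UNIV \<times> {t}) (\<lambda>_. borel)) (PiM UNIV (\<lambda>_. borel))"
      by (rule measurable_PiM_single') auto
  qed
  have "indep_vars (\<lambda>_. borel) (\<lambda>t \<omega>. (\<lambda>f. G (\<lambda>j. f (j, t))) (restrict (\<lambda>i. (\<lambda>(k, t). \<phi> k t) i \<omega>) (UNIV \<times> {t}))) {1..}"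
    by (rule indep_vars_compose2[OF R]) (rule Ym)
  then show "indep_vars (\<lambda>_. borel) (\<lambda>t \<omega>. G (\<lambda>j. \<phi> j t \<omega>)) {1..}"
    by (rule indep_vars_cong[THEN iffD1, rotated -1]) auto
next
  fix t :: nat assume t: "t \<ge> 1"
  have vec: "distr M (PiM UNIV (\<lambda>_. borel)) (\<lambda>\<omega>. \<lambda>j. \<phi> j s \<omega>) = PiM UNIV (\<lambda>j. distr M borel (\<phi> j s))"
    if s: "s \<ge> 1" for s
  proof -
    have R: "indep_vars (\<lambda>j. PiM {(j, s)} (\<lambda>_. borel))
        (\<lambda>j \<omega>. restrict (\<lambda>i. (\<lambda>(k, t). \<phi> k t) i \<omega>) {(j, s)}) UNIV"
      by (rule indep_vars_restrict[OF indep]) (use s in \<open>auto simp: disjoint_family_on_def\<close>)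
    have "indep_vars (\<lambda>_. borel) (\<lambda>j \<omega>. (\<lambda>f. f (j, s)) (restrict (\<lambda>i. (\<lambda>(k, t). \<phi> k t) i \<omega>) {(j, s)})) UNIV"
      by (rule indep_vars_compose2[OF R]) auto
    then have I: "indep_vars (\<lambda>_. borel) (\<lambda>j. \<phi> j s) UNIV"
      by (rule indep_vars_cong[THEN iffD1, rotated -1]) auto
    have "distr M (PiM UNIV (\<lambda>_. borel)) (\<lambda>\<omega>. \<lambda>j\<in>UNIV. \<phi> j s \<omega>) = PiM UNIV (\<lambda>j. distr M borel (\<phi> j s))"
      using I indep_vars_iff_distr_eq_PiM[where I=UNIV and M'="\<lambda>_. borel" and X="\<lambda>j. \<phi> j s"] meas by auto
    then show ?thesis by (simp add: restrict_def)
  qed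
  have V: "distr M (PiM UNIV (\<lambda>_. borel)) (\<lambda>\<omega>. \<lambda>j. \<phi> j t \<omega>) = distr M (PiM UNIV (\<lambda>_. borel)) (\<lambda>\<omega>. \<lambda>j. \<phi> j 1 \<omega>)"
    using vec[OF t] vec[of 1] ident[OF t] by (simp cong: PiM_cong)
  have "distr M borel (\<lambda>\<omega>. G (\<lambda>j. \<phi> j t \<omega>)) = distr (distr M (PiM UNIV (\<lambda>_. borel)) (\<lambda>\<omega>. \<lambda>j. \<phi> j t \<omega>)) borel G"
    by (subst distr_distr[OF G meas_vec[OF meas]]) (simp add: comp_def)
  also have "\<dots> = distr (distr M (PiM UNIV (\<lambda>_. borel)) (\<lambda>\<omega>. \<lambda>j. \<phi> j 1 \<omega>)) borel G"
    by (simp only: V)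
  also have "\<dots> = distr M borel (\<lambda>\<omega>. G (\<lambda>j. \<phi> j 1 \<omega>))"
    by (subst distr_distr[OF G meas_vec[OF meas]]) (simp add: comp_def)
  finally show "distr M borel (\<lambda>\<omega>. G (\<lambda>j. \<phi> j t \<omega>)) = distr M borel (\<lambda>\<omega>. G (\<lambda>j. \<phi> j 1 \<omega>))" .
qed

end


context prob_space
begin

lemma slln_bounded:
  fixes Z :: "nat \<Rightarrow> 'a \<Rightarrow> real"
  assumes indep: "indep_vars (\<lambda>_. borel) Z {1..}"
    and ident: "\<And>t. t \<ge> 1 \<Longrightarrow> distr M borel (Z t) = distr M borel (Z 1)"
    and meas: "\<And>t. Z t \<in> borel_measurable M"
    and bnd: "\<And>t \<omega>. \<omega> \<in> space M \<Longrightarrow> Z t \<omega> \<in> {a..b}"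
    and ab: "a < b"
  shows "AE \<omega> in M. avg (\<lambda>t. Z t \<omega>) \<longlonglongrightarrow> expectation (Z 1)"
proof -
  define \<mu> where "\<mu> = expectation (Z 1)"
  have ev: "AE \<omega> in M. eventually (\<lambda>T. \<bar>avg (\<lambda>t. Z t \<omega>) T - \<mu>\<bar> < \<epsilon>) sequentially"
    if eps: "\<epsilon> > 0" for \<epsilon> :: real
  proof -
    define A where "A = (\<lambda>n::nat. {\<omega>\<in>space M. \<bar>(\<Sum>t\<in>{1..Suc n}. Z t \<omega>) / real (card {1..Suc n}) - \<mu>\<bar> \<ge> \<epsilon>})"
    define c where "c = 2 * \<epsilon>\<^sup>2 / (b - a)\<^sup>2"
    have c: "c > 0" unfolding c_def using eps ab by simp
    have Ameas: "A n \<in> sets M" for n unfolding A_def using meas by measurable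
    have Abound: "measure M (A n) \<le> 2 * exp (- c) ^ Suc n" for n
    proof -
      interpret H: Hoeffding_ineq_iid M "{1..Suc n}" Z "Z 1" a b \<mu>
      proof unfold_locales
        show "indep_vars (\<lambda>_. borel) Z {1..Suc n}"
          by (rule indep_vars_subset[OF indep]) auto
        show "finite {1..Suc n}" by simp
        show "\<And>i. i \<in> {1..Suc n} \<Longrightarrow> distr M borel (Z i) = distr M borel (Z 1)" by (rule ident) simp
        show "random_variable borel (Z 1)" by (rule meas)
        show "AE x in M. Z 1 x \<in> {a..b}" using bnd by (intro AE_I2) auto
        show "\<mu> \<equiv> expectation (Z 1)" by (simp add: \<mu>_def)
      qed
      have "measure M (A n) \<le> 2 * exp (- 2 * real (card {1..Suc n}) * \<epsilon>\<^sup>2 / (b - a)\<^sup>2)"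
        unfolding A_def by (rule H.Hoeffding_ineq_abs_ge') (use eps ab in auto)
      also have "\<dots> = 2 * exp (real (Suc n) * (- c))"
        using ab by (simp add: c_def field_simps)
      also have "\<dots> = 2 * exp (- c) ^ Suc n"
        by (simp only: exp_of_nat_mult)
      finally show ?thesis .
    qed
    have summ: "summable (\<lambda>n. measure M (A n))"
    proof (rule summable_comparison_test)
      show "\<exists>N. \<forall>n\<ge>N. norm (measure M (A n)) \<le> 2 * exp (- c) ^ Suc n"
        using Abound by auto
      have "exp (- c) < 1" using c by simp
      then show "summable (\<lambda>n. 2 * exp (- c) ^ Suc n)"
        by (intro summable_mult summable_geometric[THEN summable_Suc_iff[THEN iffD2]]) simp
    qed
    have "AE \<omega> in M. eventually (\<lambda>n. \<omega> \<in> space M - A n) sequentially"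
      by (rule borel_cantelli_AE1[OF Ameas]) (auto simp: summ less_top[symmetric] emeasure_finite)
    then show ?thesis
    proof (rule eventually_mono)
      fix \<omega> assume "eventually (\<lambda>n. \<omega> \<in> space M - A n) sequentially"
      then obtain N where N: "\<And>n. n \<ge> N \<Longrightarrow> \<omega> \<in> space M - A n"
        by (auto simp: eventually_sequentially)
      show "eventually (\<lambda>T. \<bar>avg (\<lambda>t. Z t \<omega>) T - \<mu>\<bar> < \<epsilon>) sequentially"
        unfolding eventually_sequentially
      proof (intro exI[of _ "Suc N"] allI impI)
        fix T assume T: "T \<ge> Suc N"
        then obtain n where n: "T = Suc n" "n \<ge> N" by (cases T) auto
        show "\<bar>avg (\<lambda>t. Z t \<omega>) T - \<mu>\<bar> < \<epsilon>"
          using N[OF n(2)] n(1) by (simp add: A_def avg_def not_le)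
      qed
    qed
  qed
  have "AE \<omega> in M. \<forall>m::nat. eventually (\<lambda>T. \<bar>avg (\<lambda>t. Z t \<omega>) T - \<mu>\<bar> < inverse (real (Suc m))) sequentially"
    by (subst AE_all_countable) (auto intro: ev)
  then show ?thesis
  proof (rule eventually_mono)
    fix \<omega> assume H: "\<forall>m::nat. eventually (\<lambda>T. \<bar>avg (\<lambda>t. Z t \<omega>) T - \<mu>\<bar> < inverse (real (Suc m))) sequentially"
    show "avg (\<lambda>t. Z t \<omega>) \<longlonglongrightarrow> expectation (Z 1)"
      unfolding \<mu>_def[symmetric]
    proof (rule tendstoI)
      fix e :: real assume e: "e > 0"
      obtain m where m: "inverse (real (Suc m)) < e" using reals_Archimedean e by blast
      show "eventually (\<lambda>T. dist (avg (\<lambda>t. Z t \<omega>) T) \<mu> < e) sequentially"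
        using H[rule_format, of m] by eventually_elim (use m in \<open>auto simp: dist_real_def\<close>)
    qed
  qed
qed

end


context prob_space
begin

lemma indep_users:
  fixes \<phi> :: "'k::finite \<Rightarrow> nat \<Rightarrow> 'a \<Rightarrow> real"
  assumes indep: "indep_vars (\<lambda>_. borel) (\<lambda>(k, t). \<phi> k t) (UNIV \<times> {1..})"
    and s: "s \<ge> 1" and ij: "i \<noteq> j"
  shows "indep_var borel (\<phi> i s) borel (\<phi> j s)"
proof -
  have R: "indep_vars (\<lambda>j. PiM {(j, s)} (\<lambda>_. borel))
      (\<lambda>j \<omega>. restrict (\<lambda>i. (\<lambda>(k, t). \<phi> k t) i \<omega>) {(j, s)}) UNIV"
    by (rule indep_vars_restrict[OF indep]) (use s in \<open>auto simp: disjoint_family_on_def\<close>)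
  have "indep_vars (\<lambda>_. borel) (\<lambda>j \<omega>. (\<lambda>f. f (j, s)) (restrict (\<lambda>i. (\<lambda>(k, t). \<phi> k t) i \<omega>) {(j, s)})) UNIV"
    by (rule indep_vars_compose2[OF R]) auto
  then have I: "indep_vars (\<lambda>_. borel) (\<lambda>j. \<phi> j s) UNIV"
    by (rule indep_vars_cong[THEN iffD1, rotated -1]) auto
  have "indep_var borel ((\<lambda>f. f i) \<circ> (\<lambda>\<omega>. restrict (\<lambda>k. \<phi> k s \<omega>) {i}))
                  borel ((\<lambda>f. f j) \<circ> (\<lambda>\<omega>. restrict (\<lambda>k. \<phi> k s \<omega>) {j}))"
    using ij by (intro indep_var_compose[OF indep_var_restrict[OF I]]) auto
  also have "((\<lambda>f. f i) \<circ> (\<lambda>\<omega>. restrict (\<lambda>k. \<phi> k s \<omega>) {i})) = \<phi> i s" by (auto simp: fun_eq_iff)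
  also have "((\<lambda>f. f j) \<circ> (\<lambda>\<omega>. restrict (\<lambda>k. \<phi> k s \<omega>) {j})) = \<phi> j s" by (auto simp: fun_eq_iff)
  finally show ?thesis .
qed

lemma no_atom:
  assumes d: "distributed M lborel X f"
  shows "emeasure (distr M borel X) {x0} = 0"
proof -
  have fm: "f \<in> borel_measurable lborel" and Xm: "X \<in> measurable M lborel" and de: "distr M lborel X = density lborel f"
    using d by (auto simp: distributed_def)
  have "distr M borel X = distr M lborel X" by (rule distr_cong) auto
  also have "\<dots> = density lborel f" by (rule de)
  finally have "emeasure (distr M borel X) {x0} = emeasure (density lborel f) {x0}" by simp
  also have "\<dots> = (\<integral>\<^sup>+ x. f x * indicator {x0} x \<partial>lborel)"
    by (rule emeasure_density[OF fm]) simp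
  also have "\<dots> = 0"
    by (rule nn_integral_null_set) (simp add: null_sets_def)
  finally show ?thesis .
qed

lemma tie_zero:
  fixes X Y :: "'a \<Rightarrow> real" and g h :: "real \<Rightarrow> real"
  assumes Xm: "X \<in> borel_measurable M" and Ym: "Y \<in> borel_measurable M"
    and ind: "indep_var borel Y borel X" and dist: "distributed M lborel X f"
    and nnX: "\<And>\<omega>. \<omega> \<in> space M \<Longrightarrow> X \<omega> \<ge> 0" and nnY: "\<And>\<omega>. \<omega> \<in> space M \<Longrightarrow> Y \<omega> \<ge> 0"
    and inj: "\<And>x x'. x \<ge> 0 \<Longrightarrow> x' \<ge> 0 \<Longrightarrow> g x = g x' \<Longrightarrow> x = x'"
    and gm: "g \<in> borel_measurable borel" and hm: "h \<in> borel_measurable borel"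
  shows "prob {\<omega>\<in>space M. g (X \<omega>) = h (Y \<omega>)} = 0"
proof -
  define S where "S = {p\<in>space (borel \<Otimes>\<^sub>M borel). fst p \<ge> (0::real) \<and> snd p \<ge> (0::real) \<and> g (snd p) = h (fst p)}"
  have Ssets: "S \<in> sets (borel \<Otimes>\<^sub>M borel)" unfolding S_def using gm hm by measurable
  have ev: "{\<omega>\<in>space M. g (X \<omega>) = h (Y \<omega>)} = (\<lambda>\<omega>. (Y \<omega>, X \<omega>)) -` S \<inter> space M"
    using nnX nnY by (auto simp: S_def space_pair_measure)
  have YXm: "(\<lambda>\<omega>. (Y \<omega>, X \<omega>)) \<in> measurable M (borel \<Otimes>\<^sub>M borel)" using Xm Ym by measurable
  have "emeasure M {\<omega>\<in>space M. g (X \<omega>) = h (Y \<omega>)} = emeasure (distr M (borel \<Otimes>\<^sub>M borel) (\<lambda>\<omega>. (Y \<omega>, X \<omega>))) S"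
    unfolding ev by (rule emeasure_distr[OF YXm Ssets, symmetric])
  also have "\<dots> = emeasure (distr M borel Y \<Otimes>\<^sub>M distr M borel X) S"
    using ind unfolding indep_var_distribution_eq by simp
  also have "\<dots> = (\<integral>\<^sup>+y. emeasure (distr M borel X) (Pair y -` S) \<partial>distr M borel Y)"
  proof -
    interpret PX: prob_space "distr M borel X" by (rule prob_space_distr[OF Xm])
    show ?thesis by (rule PX.emeasure_pair_measure_alt) (use Ssets in simp)
  qed
  also have "\<dots> = (\<integral>\<^sup>+y. 0 \<partial>distr M borel Y)"
  proof (rule nn_integral_cong)
    fix y
    show "emeasure (distr M borel X) (Pair y -` S) = 0"
    proof (cases "\<exists>x0. x0 \<in> Pair y -` S")
      case False then have "Pair y -` S = {}" by auto
      then show ?thesis by simp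
    next
      case True
      then obtain x0 where x0: "x0 \<in> Pair y -` S" by blast
      have sub: "Pair y -` S \<subseteq> {x0}"
        using x0 inj by (auto simp: S_def)
      have "emeasure (distr M borel X) (Pair y -` S) \<le> emeasure (distr M borel X) {x0}"
        by (rule emeasure_mono[OF sub]) simp
      then show ?thesis using no_atom[OF dist, of x0] by simp
    qed
  qed
  also have "\<dots> = 0" by simp
  finally show ?thesis by (simp add: measure_def)
qed

end


lemma v_inj:
  assumes "D > 0" "B > 0" "(wi::real) > 0" "x \<ge> 0" "x' \<ge> 0"
    and "wi * slot_rate D B x = wi * slot_rate D B x'"
  shows "x = x'"
proof -
  have "log 2 (1 + x) = log 2 (1 + x')" using assms by (simp add: slot_rate_def)
  then have "1 + x = 1 + x'"
    using assms(4,5) by (metis antisym log_le_cancel_iff one_less_numeral_iff semiring_norm(76) add_pos_nonneg zero_less_one order_refl)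
  then show ?thesis by simp
qed

context prob_space
begin

lemma near_lim:
  fixes \<phi> :: "'k::finite \<Rightarrow> nat \<Rightarrow> 'a \<Rightarrow> real"
  assumes D: "D > 0" and B: "B > 0" and w: "\<And>k. w k > 0"
    and meas: "\<And>k t. \<phi> k t \<in> borel_measurable M"
    and indep: "indep_vars (\<lambda>_. borel) (\<lambda>(k, t). \<phi> k t) (UNIV \<times> {1..})"
    and cont: "\<And>k. \<exists>f. distributed M lborel (\<phi> k 1) f"
    and nonneg: "\<And>k \<omega>. \<omega> \<in> space M \<Longrightarrow> \<phi> k 1 \<omega> \<ge> 0"
  shows "(\<lambda>n. prob {\<omega>\<in>space M. near D B w (inverse (real (Suc n))) (\<lambda>j. \<phi> j 1 \<omega>)}) \<longlonglongrightarrow> 0"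
proof -
  define P where "P = {(i, j). (i::'k) \<noteq> j}"
  define A where "A = (\<lambda>n (p::'k \<times> 'k). {\<omega>\<in>space M. \<bar>w (fst p) * slot_rate D B (\<phi> (fst p) 1 \<omega>) - w (snd p) * slot_rate D B (\<phi> (snd p) 1 \<omega>)\<bar> < inverse (real (Suc n))})"
  have Asets: "A n p \<in> sets M" for n p unfolding A_def slot_rate_def using meas by measurable
  have eq: "{\<omega>\<in>space M. near D B w (inverse (real (Suc n))) (\<lambda>j. \<phi> j 1 \<omega>)} = (\<Union>p\<in>P. A n p)" for n
    by (auto simp: near_def A_def P_def) blast
  have le: "prob {\<omega>\<in>space M. near D B w (inverse (real (Suc n))) (\<lambda>j. \<phi> j 1 \<omega>)} \<le> (\<Sum>p\<in>P. prob (A n p))" for n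
    unfolding eq by (rule finite_measure_subadditive_finite) (use Asets in auto)
  have each: "(\<lambda>n. prob (A n p)) \<longlonglongrightarrow> 0" if p: "p \<in> P" for p
  proof -
    obtain i j where pij: "p = (i, j)" and ij: "i \<noteq> j" using p by (auto simp: P_def)
    have "(\<lambda>n. prob (A n p)) \<longlonglongrightarrow> prob (\<Inter>n. A n p)"
    proof (rule finite_Lim_measure_decseq)
      show "range (\<lambda>n. A n p) \<subseteq> sets M" using Asets by blast
      show "decseq (\<lambda>n. A n p)"
      proof (rule decseq_SucI)
        fix n
        have inv: "inverse (real (Suc (Suc n))) \<le> inverse (real (Suc n))"
          by (rule le_imp_inverse_le) auto
        show "A (Suc n) p \<subseteq> A n p" unfolding A_def
          by (auto simp del: of_nat_Suc intro: less_le_trans[OF _ inv])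
      qed
    qed
    also have "(\<Inter>n. A n p) = {\<omega>\<in>space M. w i * slot_rate D B (\<phi> i 1 \<omega>) = w j * slot_rate D B (\<phi> j 1 \<omega>)}"
    proof (intro equalityI subsetI)
      fix \<omega> assume a: "\<omega> \<in> (\<Inter>n. A n p)"
      define d where "d = \<bar>w i * slot_rate D B (\<phi> i 1 \<omega>) - w j * slot_rate D B (\<phi> j 1 \<omega>)\<bar>"
      have dl: "d < inverse (real (Suc n))" for n using a unfolding A_def d_def pij by auto
      have "d = 0"
      proof (rule ccontr)
        assume "d \<noteq> 0"
        then have "d > 0" unfolding d_def by simp
        then obtain n where "inverse (real (Suc n)) < d" using reals_Archimedean by blast
        then show False using dl[of n] by simp
      qed
      then show "\<omega> \<in> {\<omega>\<in>space M. w i * slot_rate D B (\<phi> i 1 \<omega>) = w j * slot_rate D B (\<phi> j 1 \<omega>)}"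
        using a unfolding d_def A_def by auto
    qed (auto simp: A_def pij)
    also have "prob {\<omega>\<in>space M. w i * slot_rate D B (\<phi> i 1 \<omega>) = w j * slot_rate D B (\<phi> j 1 \<omega>)} = 0"
    proof -
      obtain f where f: "distributed M lborel (\<phi> i 1) f" using cont by blast
      show ?thesis
      proof (rule tie_zero[OF meas meas _ f])
        show "indep_var borel (\<phi> j 1) borel (\<phi> i 1)" by (rule indep_users[OF indep]) (use ij in auto)
        show "\<And>x x'. 0 \<le> x \<Longrightarrow> 0 \<le> x' \<Longrightarrow> w i * slot_rate D B x = w i * slot_rate D B x' \<Longrightarrow> x = x'"
          using v_inj[OF D B w] by blast
        show "(\<lambda>x. w i * slot_rate D B x) \<in> borel_measurable borel" unfolding slot_rate_def by measurable
        show "(\<lambda>x. w j * slot_rate D B x) \<in> borel_measurable borel" unfolding slot_rate_def by measurable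
      qed (use nonneg in auto)
    qed
    finally show ?thesis .
  qed
  have "(\<lambda>n. \<Sum>p\<in>P. prob (A n p)) \<longlonglongrightarrow> 0"
    by (rule tendsto_null_sum) (rule each)
  then show ?thesis
    by (rule real_tendsto_sandwich[rotated 2, OF tendsto_const]) (use le in auto)
qed

end


lemma Mx_alt: "Mx D B w s = max 0 (Max ((\<lambda>k. w k * slot_rate D B (s k)) ` UNIV))"
  unfolding Mx_def by (subst Max_insert) auto

lemma Mx_meas: "(\<lambda>s. Mx D B w s) \<in> borel_measurable (PiM (UNIV::'k::finite set) (\<lambda>_. borel))"
  unfolding Mx_alt slot_rate_def by measurable

lemma near_meas: "(\<lambda>s. if near D B w \<eta> s then 1 else (0::real)) \<in> borel_measurable (PiM (UNIV::'k::finite set) (\<lambda>_. borel))"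
  unfolding near_def slot_rate_def by measurable

context prob_space
begin

lemma avg_meas:
  assumes [measurable]: "\<And>t. X t \<in> borel_measurable M"
  shows "(\<lambda>\<omega>. avg (\<lambda>t. X t \<omega>) T) \<in> borel_measurable M"
  unfolding avg_def by measurable

lemma EM_lemma:
  fixes Mt :: "nat \<Rightarrow> 'a \<Rightarrow> real"
  assumes meas: "\<And>t. Mt t \<in> borel_measurable M"
    and nonneg: "\<And>t \<omega>. \<omega> \<in> space M \<Longrightarrow> Mt t \<omega> \<ge> 0"
    and ident: "\<And>t. t \<ge> 1 \<Longrightarrow> distr M borel (Mt t) = distr M borel (Mt 1)"
    and conv: "AE \<omega> in M. convergent (avg (\<lambda>t. Mt t \<omega>))"
    and trunc: "AE \<omega> in M. \<forall>L::nat. avg (\<lambda>t. min (Mt t \<omega>) (real L)) \<longlonglongrightarrow> expectation (\<lambda>\<omega>. min (Mt 1 \<omega>) (real L))"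
  shows "(\<lambda>L::nat. expectation (\<lambda>\<omega>. min (Mt 1 \<omega>) (real L))) \<longlonglongrightarrow> expectation (Mt 1)"
    and "AE \<omega> in M. avg (\<lambda>t. Mt t \<omega>) \<longlonglongrightarrow> expectation (Mt 1)"
proof -
  define m where "m = (\<lambda>L::nat. expectation (\<lambda>\<omega>. min (Mt 1 \<omega>) (real L)))"
  define c where "c = (\<lambda>\<omega>. lim (avg (\<lambda>t. Mt t \<omega>)))"
  define E where "E = expectation (Mt 1)"
  have good: "AE \<omega> in M. avg (\<lambda>t. Mt t \<omega>) \<longlonglongrightarrow> c \<omega>"
    using conv by (rule eventually_mono) (simp add: c_def convergent_LIMSEQ_iff)
  have cge: "AE \<omega> in M. \<forall>L. m L \<le> c \<omega>"
    using good trunc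
  proof eventually_elim
    case (elim \<omega>)
    show ?case
    proof
      fix L
      show "m L \<le> c \<omega>"
        unfolding m_def
        by (rule LIMSEQ_le[OF elim(2)[rule_format, of L] elim(1)]) (auto intro!: avg_mono)
    qed
  qed
  have "AE \<omega> in M. \<exists>\<omega>0. \<forall>L. m L \<le> c \<omega>0" using cge by (rule eventually_mono) blast
  then obtain \<omega>0 where \<omega>0: "\<And>L. m L \<le> c \<omega>0" by auto
  have m1: "Mt 1 \<in> borel_measurable M" by (rule meas)
  have int_min: "integrable M (\<lambda>\<omega>. min (Mt 1 \<omega>) (real L))" for L :: nat
  proof (rule integrable_const_bound[where B="real L"])
    show "(\<lambda>\<omega>. min (Mt 1 \<omega>) (real L)) \<in> borel_measurable M" using m1 by measurable
  qed (use nonneg in \<open>auto intro!: AE_I2\<close>)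
  have nn_min: "(\<integral>\<^sup>+\<omega>. ennreal (min (Mt 1 \<omega>) (real L)) \<partial>M) = ennreal (m L)" for L :: nat
    unfolding m_def by (rule nn_integral_eq_integral[OF int_min]) (use nonneg in \<open>auto intro!: AE_I2\<close>)
  have "(\<lambda>L. \<integral>\<^sup>+\<omega>. ennreal (min (Mt 1 \<omega>) (real L)) \<partial>M) \<longlonglongrightarrow> (\<integral>\<^sup>+\<omega>. ennreal (Mt 1 \<omega>) \<partial>M)"
  proof (rule nn_integral_LIMSEQ)
    show "incseq (\<lambda>L \<omega>. ennreal (min (Mt 1 \<omega>) (real L)))"
      by (auto simp: incseq_def le_fun_def intro!: ennreal_leI)
    show "\<And>L. (\<lambda>\<omega>. ennreal (min (Mt 1 \<omega>) (real L))) \<in> borel_measurable M" using m1 by measurable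
    fix \<omega>
    show "(\<lambda>L. ennreal (min (Mt 1 \<omega>) (real L))) \<longlonglongrightarrow> ennreal (Mt 1 \<omega>)"
    proof (rule tendsto_ennrealI, rule Lim_transform_eventually[OF tendsto_const])
      obtain N :: nat where "Mt 1 \<omega> \<le> real N" using real_arch_simple by blast
      then show "\<forall>\<^sub>F L in sequentially. Mt 1 \<omega> = min (Mt 1 \<omega>) (real L)"
        unfolding eventually_sequentially by (intro exI[of _ N]) auto
    qed
  qed
  then have "(\<integral>\<^sup>+\<omega>. ennreal (Mt 1 \<omega>) \<partial>M) \<le> ennreal (c \<omega>0)"
    by (rule LIMSEQ_le_const2) (use \<omega>0 nn_min in \<open>auto intro!: ennreal_leI\<close>)
  then have int1: "integrable M (Mt 1)"
    by (intro integrableI_nonneg[OF m1]) (use nonneg in \<open>auto intro!: AE_I2 simp: less_top[symmetric] top_unique\<close>)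
  have int_t: "integrable M (Mt t)" and E_t: "expectation (Mt t) = E" if t: "t \<ge> 1" for t
  proof -
    have "integrable (distr M borel (Mt t)) (\<lambda>x. x) = integrable (distr M borel (Mt 1)) (\<lambda>x. x)"
      by (simp only: ident[OF t])
    then show "integrable M (Mt t)"
      using int1 by (simp add: integrable_distr_eq[OF meas])
    have "integral\<^sup>L (distr M borel (Mt t)) (\<lambda>x. x) = integral\<^sup>L (distr M borel (Mt 1)) (\<lambda>x. x)"
      by (simp only: ident[OF t])
    then show "expectation (Mt t) = E"
      by (simp add: integral_distr[OF meas] E_def)
  qed
  show mlim: "m \<longlonglongrightarrow> E"
    unfolding m_def E_def
  proof (rule integral_dominated_convergence[where w="Mt 1"])
    show "AE \<omega> in M. (\<lambda>L. min (Mt 1 \<omega>) (real L)) \<longlonglongrightarrow> Mt 1 \<omega>"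
    proof (rule AE_I2, rule Lim_transform_eventually[OF tendsto_const])
      fix \<omega>
      obtain N :: nat where "Mt 1 \<omega> \<le> real N" using real_arch_simple by blast
      then show "\<forall>\<^sub>F L in sequentially. Mt 1 \<omega> = min (Mt 1 \<omega>) (real L)"
        unfolding eventually_sequentially by (intro exI[of _ N]) auto
    qed
    show "\<And>L. AE \<omega> in M. norm (min (Mt 1 \<omega>) (real L)) \<le> Mt 1 \<omega>"
      using nonneg by (auto intro!: AE_I2)
  qed (use m1 int1 in auto)
  have E0: "E \<ge> 0" unfolding E_def using nonneg by (simp add: integral_nonneg_AE AE_I2)
  have cgeE: "AE \<omega> in M. E \<le> c \<omega>"
    using cge by (rule eventually_mono) (rule LIMSEQ_le_const2[OF mlim], auto)
  have avgm: "\<And>T. (\<lambda>\<omega>. avg (\<lambda>t. Mt t \<omega>) T) \<in> borel_measurable M" by (rule avg_meas[OF meas])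
  have nn_avg: "(\<integral>\<^sup>+\<omega>. ennreal (avg (\<lambda>t. Mt t \<omega>) T) \<partial>M) = ennreal E" if T: "T \<ge> 1" for T
  proof -
    have ia: "integrable M (\<lambda>\<omega>. avg (\<lambda>t. Mt t \<omega>) T)"
      unfolding avg_def by (intro integrable_divide Bochner_Integration.integrable_sum int_t) auto
    have "(\<integral>\<^sup>+\<omega>. ennreal (avg (\<lambda>t. Mt t \<omega>) T) \<partial>M) = ennreal (expectation (\<lambda>\<omega>. avg (\<lambda>t. Mt t \<omega>) T))"
      by (rule nn_integral_eq_integral[OF ia]) (use nonneg in \<open>auto intro!: AE_I2 simp: avg_def sum_nonneg\<close>)
    also have "expectation (\<lambda>\<omega>. avg (\<lambda>t. Mt t \<omega>) T) = (\<Sum>t=1..T. expectation (Mt t)) / real T"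
      unfolding avg_def by (simp add: Bochner_Integration.integral_sum int_t)
    also have "\<dots> = E" using T by (simp add: E_t)
    finally show ?thesis .
  qed
  have "(\<integral>\<^sup>+\<omega>. liminf (\<lambda>T. ennreal (avg (\<lambda>t. Mt t \<omega>) T)) \<partial>M) \<le> liminf (\<lambda>T. \<integral>\<^sup>+\<omega>. ennreal (avg (\<lambda>t. Mt t \<omega>) T) \<partial>M)"
    by (rule nn_integral_liminf) (use avgm in measurable)
  also have "liminf (\<lambda>T. \<integral>\<^sup>+\<omega>. ennreal (avg (\<lambda>t. Mt t \<omega>) T) \<partial>M) = ennreal E"
  proof (rule lim_imp_Liminf)
    show "(\<lambda>T. \<integral>\<^sup>+\<omega>. ennreal (avg (\<lambda>t. Mt t \<omega>) T) \<partial>M) \<longlonglongrightarrow> ennreal E"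
      by (rule Lim_transform_eventually[OF tendsto_const]) (auto simp: eventually_sequentially nn_avg intro!: exI[of _ 1])
  qed simp
  also have "(\<integral>\<^sup>+\<omega>. liminf (\<lambda>T. ennreal (avg (\<lambda>t. Mt t \<omega>) T)) \<partial>M) = (\<integral>\<^sup>+\<omega>. ennreal (c \<omega>) \<partial>M)"
  proof (rule nn_integral_cong_AE)
    show "AE \<omega> in M. liminf (\<lambda>T. ennreal (avg (\<lambda>t. Mt t \<omega>) T)) = ennreal (c \<omega>)"
      using good by (rule eventually_mono) (rule lim_imp_Liminf, simp, rule tendsto_ennrealI)
  qed
  finally have intc: "(\<integral>\<^sup>+\<omega>. ennreal (c \<omega>) \<partial>M) \<le> ennreal E" .
  have cm: "c \<in> borel_measurable M" unfolding c_def using avgm by measurable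
  have "(\<integral>\<^sup>+\<omega>. ennreal (c \<omega>) \<partial>M) = (\<integral>\<^sup>+\<omega>. ennreal (c \<omega> - E) + ennreal E \<partial>M)"
    using cgeE E0 by (intro nn_integral_cong_AE) (auto elim!: eventually_mono simp: ennreal_plus[symmetric])
  also have "\<dots> = (\<integral>\<^sup>+\<omega>. ennreal (c \<omega> - E) \<partial>M) + ennreal E"
    using cm by (subst nn_integral_add) (auto simp: emeasure_space_1)
  finally have "(\<integral>\<^sup>+\<omega>. ennreal (c \<omega> - E) \<partial>M) + ennreal E \<le> 0 + ennreal E" using intc by simp
  then have "(\<integral>\<^sup>+\<omega>. ennreal (c \<omega> - E) \<partial>M) = 0"
    by (subst (asm) add.commute, subst (asm) (2) add.commute, subst (asm) ennreal_add_left_cancel_le) simp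
  then have "AE \<omega> in M. ennreal (c \<omega> - E) = 0"
    using cm by (subst (asm) nn_integral_0_iff_AE) auto
  then have "AE \<omega> in M. c \<omega> = E"
    using cgeE by eventually_elim (auto simp: ennreal_eq_0_iff)
  then show "AE \<omega> in M. avg (\<lambda>t. Mt t \<omega>) \<longlonglongrightarrow> expectation (Mt 1)"
    using good by eventually_elim (simp add: E_def)
qed

end


theorem corollary1:
  fixes M :: "'a measure"
    and \<phi> :: "'k::finite \<Rightarrow> nat \<Rightarrow> 'a \<Rightarrow> real"
    and \<Delta>0 B :: real
    and w :: "'k \<Rightarrow> real"
    and mu :: "('k \<Rightarrow> real) \<Rightarrow> ('k \<Rightarrow> real)"
  assumes "prob_space M"
    and "\<Delta>0 > 0" and "B > 0"
    and meas: "\<And>k t. \<phi> k t \<in> borel_measurable M"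
    and nonneg: "\<And>k t \<omega>. t \<ge> 1 \<Longrightarrow> \<omega> \<in> space M \<Longrightarrow> \<phi> k t \<omega> \<ge> 0"
    and indep: "prob_space.indep_vars M (\<lambda>_. borel) (\<lambda>(k, t). \<phi> k t) (UNIV \<times> {1..})"
    and ident: "\<And>k t. t \<ge> 1 \<Longrightarrow> distr M borel (\<phi> k t) = distr M borel (\<phi> k 1)"
    and cont: "\<And>k. \<exists>f. distributed M lborel (\<phi> k 1) f"
    and wpos: "\<And>k. w k > 0"
    and wnorm: "sqrt (\<Sum>k\<in>UNIV. (w k)\<^sup>2) = 1"
    and mw: "max_weight_scheduler \<Delta>0 B w mu"
    and lim_exists: "AE \<omega> in M. \<forall>k. convergent
        (avg_rate \<Delta>0 B (\<lambda>t. mu (\<lambda>j. \<phi> j t \<omega>)) (\<lambda>j t. \<phi> j t \<omega>) k)"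
  shows "AE \<omega> in M.
     argmax_inner w (feasible_region \<Delta>0 B (\<lambda>j t. \<phi> j t \<omega>)) =
       {(\<lambda>k. lim (avg_rate \<Delta>0 B (\<lambda>t. mu (\<lambda>j. \<phi> j t \<omega>)) (\<lambda>j t. \<phi> j t \<omega>) k))}"
proof -
  interpret prob_space M by fact
  have D: "\<Delta>0 > 0" and Bp: "B > 0" by fact+
  define Mt where "Mt = (\<lambda>t \<omega>. Mx \<Delta>0 B w (\<lambda>j. \<phi> j t \<omega>))"
  define Z3 where "Z3 = (\<lambda>(L::nat) t \<omega>. min (Mt t \<omega>) (real L))"
  define Z4 where "Z4 = (\<lambda>(n::nat) t \<omega>. if near \<Delta>0 B w (inverse (real (Suc n))) (\<lambda>j. \<phi> j t \<omega>) then 1 else (0::real))"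
  have G3: "(\<lambda>s. min (Mx \<Delta>0 B w s) (real L)) \<in> borel_measurable (PiM UNIV (\<lambda>_. borel))" for L :: nat
    using Mx_meas[of \<Delta>0 B w] by measurable
  note iidM = iid_G[OF meas indep ident Mx_meas[of \<Delta>0 B w]]
  note iid3 = iid_G[OF meas indep ident G3]
  note iid4 = iid_G[OF meas indep ident near_meas[of \<Delta>0 B w]]
  have Mtm: "Mt t \<in> borel_measurable M" for t
    unfolding Mt_def by (rule measurable_compose[OF meas_vec[OF meas] Mx_meas])
  have H3: "AE \<omega> in M. \<forall>L. avg (\<lambda>t. Z3 L t \<omega>) \<longlonglongrightarrow> expectation (Z3 L 1)"
  proof (subst AE_all_countable, intro allI)
    fix L :: nat
    show "AE \<omega> in M. avg (\<lambda>t. Z3 L t \<omega>) \<longlonglongrightarrow> expectation (Z3 L 1)"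
    proof (rule slln_bounded[where a=0 and b="real L + 1"])
      show "indep_vars (\<lambda>_. borel) (Z3 L) {1..}" unfolding Z3_def Mt_def by (rule iid3(1))
      show "\<And>t. 1 \<le> t \<Longrightarrow> distr M borel (Z3 L t) = distr M borel (Z3 L 1)"
        unfolding Z3_def Mt_def by (rule iid3(2))
      show "\<And>t. random_variable borel (Z3 L t)" unfolding Z3_def using Mtm by measurable
      show "\<And>t \<omega>. \<omega> \<in> space M \<Longrightarrow> Z3 L t \<omega> \<in> {0..real L + 1}"
        unfolding Z3_def Mt_def using Mx_ge0 by auto
    qed simp
  qed
  have H4: "AE \<omega> in M. \<forall>n. avg (\<lambda>t. Z4 n t \<omega>) \<longlonglongrightarrow> expectation (Z4 n 1)"
  proof (subst AE_all_countable, intro allI)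
    fix n :: nat
    show "AE \<omega> in M. avg (\<lambda>t. Z4 n t \<omega>) \<longlonglongrightarrow> expectation (Z4 n 1)"
    proof (rule slln_bounded[where a=0 and b=1])
      show "indep_vars (\<lambda>_. borel) (Z4 n) {1..}" unfolding Z4_def by (rule iid4(1))
      show "\<And>t. 1 \<le> t \<Longrightarrow> distr M borel (Z4 n t) = distr M borel (Z4 n 1)"
        unfolding Z4_def by (rule iid4(2))
      show "\<And>t. random_variable borel (Z4 n t)" unfolding Z4_def
        by (rule measurable_compose[OF meas_vec[OF meas] near_meas])
      show "\<And>t \<omega>. \<omega> \<in> space M \<Longrightarrow> Z4 n t \<omega> \<in> {0..1}"
        unfolding Z4_def by auto
    qed simp
  qed
  have conv: "AE \<omega> in M. convergent (avg (\<lambda>t. Mt t \<omega>))"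
    using lim_exists
  proof (rule eventually_mono)
    fix \<omega> assume c: "\<forall>k. convergent (avg_rate \<Delta>0 B (\<lambda>t. mu (\<lambda>j. \<phi> j t \<omega>)) (\<lambda>j t. \<phi> j t \<omega>) k)"
    have eq: "avg (\<lambda>t. Mt t \<omega>) = (\<lambda>T. \<Sum>k\<in>UNIV. w k * avg_rate \<Delta>0 B (\<lambda>t. mu (\<lambda>j. \<phi> j t \<omega>)) (\<lambda>j t. \<phi> j t \<omega>) k T)"
      unfolding Mt_def using mw_obj[OF mw] obj_avg[of \<Delta>0 B w "\<lambda>j t. \<phi> j t \<omega>" "\<lambda>t. mu (\<lambda>j. \<phi> j t \<omega>)"]
      by (simp add: fun_eq_iff)
    have "(\<lambda>T. \<Sum>k\<in>UNIV. w k * avg_rate \<Delta>0 B (\<lambda>t. mu (\<lambda>j. \<phi> j t \<omega>)) (\<lambda>j t. \<phi> j t \<omega>) k T)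
        \<longlonglongrightarrow> (\<Sum>k\<in>UNIV. w k * lim (avg_rate \<Delta>0 B (\<lambda>t. mu (\<lambda>j. \<phi> j t \<omega>)) (\<lambda>j t. \<phi> j t \<omega>) k))"
      using c by (intro tendsto_sum tendsto_mult tendsto_const) (auto simp: convergent_LIMSEQ_iff)
    then show "convergent (avg (\<lambda>t. Mt t \<omega>))" unfolding eq by (rule convergentI)
  qed
  have a1: "\<And>t \<omega>. \<omega> \<in> space M \<Longrightarrow> 0 \<le> Mt t \<omega>" unfolding Mt_def by (rule Mx_ge0)
  have a2: "\<And>t. 1 \<le> t \<Longrightarrow> distr M borel (Mt t) = distr M borel (Mt 1)" unfolding Mt_def by (rule iidM(2))
  have a3: "AE \<omega> in M. \<forall>L::nat. avg (\<lambda>t. min (Mt t \<omega>) (real L)) \<longlonglongrightarrow> expectation (\<lambda>\<omega>. min (Mt 1 \<omega>) (real L))"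
    using H3 unfolding Z3_def by simp
  have EM1: "(\<lambda>L::nat. expectation (\<lambda>\<omega>. min (Mt 1 \<omega>) (real L))) \<longlonglongrightarrow> expectation (Mt 1)"
    by (rule EM_lemma(1)[of Mt]) (fact Mtm a1 a2 conv a3)+
  have EM2: "AE \<omega> in M. avg (\<lambda>t. Mt t \<omega>) \<longlonglongrightarrow> expectation (Mt 1)"
    by (rule EM_lemma(2)[of Mt]) (fact Mtm a1 a2 conv a3)+
  have plim: "(\<lambda>n. expectation (Z4 n 1)) \<longlonglongrightarrow> 0"
  proof -
    have "expectation (Z4 n 1) = prob {\<omega>\<in>space M. near \<Delta>0 B w (inverse (real (Suc n))) (\<lambda>j. \<phi> j 1 \<omega>)}" for n
    proof -
      have "expectation (Z4 n 1) = expectation (indicator {\<omega>\<in>space M. near \<Delta>0 B w (inverse (real (Suc n))) (\<lambda>j. \<phi> j 1 \<omega>)})"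
        by (rule Bochner_Integration.integral_cong) (auto simp: Z4_def indicator_def)
      then show ?thesis by (simp add: Int_absorb2 Collect_subset)
    qed
    moreover have "(\<lambda>n. prob {\<omega>\<in>space M. near \<Delta>0 B w (inverse (real (Suc n))) (\<lambda>j. \<phi> j 1 \<omega>)}) \<longlonglongrightarrow> 0"
      by (rule near_lim[OF D Bp wpos meas indep cont]) (use nonneg in auto)
    ultimately show ?thesis by simp
  qed
  have nn: "AE \<omega> in M. \<forall>k t. t \<ge> 1 \<longrightarrow> \<phi> k t \<omega> \<ge> 0" using nonneg by (auto intro!: AE_I2)
  show ?thesis
    using lim_exists H3 H4 EM2 nn
  proof eventually_elim
    case (elim \<omega>)
    show ?case
    proof (rule pathwise[OF D Bp wpos mw])
      show "\<And>k t. 1 \<le> t \<Longrightarrow> 0 \<le> \<phi> k t \<omega>" using elim(5) by auto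
      show "\<forall>k. convergent (avg_rate \<Delta>0 B (\<lambda>t. mu (\<lambda>j. \<phi> j t \<omega>)) (\<lambda>j t. \<phi> j t \<omega>) k)" using elim(1) by simp
      show "\<And>L. avg (\<lambda>t. min (Mx \<Delta>0 B w (\<lambda>j. \<phi> j t \<omega>)) (real L)) \<longlonglongrightarrow> expectation (\<lambda>\<omega>. min (Mt 1 \<omega>) (real L))"
        using elim(2) unfolding Z3_def Mt_def by simp
      show "\<And>n. avg (\<lambda>t. if near \<Delta>0 B w (inverse (real (Suc n))) (\<lambda>j. \<phi> j t \<omega>) then 1 else 0) \<longlonglongrightarrow> expectation (Z4 n 1)"
        using elim(3) unfolding Z4_def by simp
      show "avg (\<lambda>t. Mx \<Delta>0 B w (\<lambda>j. \<phi> j t \<omega>)) \<longlonglongrightarrow> expectation (Mt 1)"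
        using elim(4) unfolding Mt_def by simp
      show "(\<lambda>L. expectation (\<lambda>\<omega>. min (Mt 1 \<omega>) (real L))) \<longlonglongrightarrow> expectation (Mt 1)" by (rule EM1)
      show "(\<lambda>n. expectation (Z4 n 1)) \<longlonglongrightarrow> 0" by (rule plim)
    qed
  qed
qed

end
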